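(* Let $\mathcal{A}$ be a finite alphabet and let $P$, $Q$, $R$ be probability mass functions on $\mathcal{A}$. Let $p_{\min}=\min_{a\in\mathcal{A}}P(a)$, $p_{\max}=\max_{a\in\mathcal{A}}P(a)$, $r_{\min}=\min_{a\in\mathcal{A}}R(a)$, $r_{\max}=\max_{a\in\mathcal{A}}R(a)$, and $d_1=\sum_{a\in\mathcal{A}}|P(a)-Q(a)|$. If $d_1<2p_{\min}$, then \[ D(Q\|R)-D(P\|R)\le \frac{d_1}{2}\log_2\!\left(\frac{p_{\max}+d_1/2}{p_{\min}-d_1/2}\cdot\frac{r_{\max}}{r_{\min}}\right). \]
   Context: $D(P\|R)=\sum_{a: P(a)>0}P(a)\log_2\frac{P(a)}{R(a)}$ is the informational divergence (Kullback–Leibler divergence in bits). *)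

theory Defs
  imports Complex_Main
begin

definition is_pmf :: "('a::finite \<Rightarrow> real) \<Rightarrow> bool" where
  "is_pmf P \<longleftrightarrow> (\<forall>a. P a \<ge> 0) \<and> (\<Sum>a\<in>UNIV. P a) = 1"

definition divergence :: "('a::finite \<Rightarrow> real) \<Rightarrow> ('a \<Rightarrow> real) \<Rightarrow> real" where
  "divergence P R = (\<Sum>a\<in>{a. P a > 0}. P a * log 2 (P a / R a))"

end

theory Submission
  imports Defs
begin

lemma wsum_bound:
  fixes w g :: "'a::finite \<Rightarrow> real"
  assumes "(\<Sum>a\<in>UNIV. w a) = 0" and "\<And>a. m \<le> g a" and "\<And>a. g a \<le> M"
  shows "(\<Sum>a\<in>UNIV. w a * g a) \<le> (\<Sum>a\<in>UNIV. \<bar>w a\<bar>) / 2 * (M - m)"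
proof -
  have "(\<Sum>a\<in>UNIV. w a * g a) = (\<Sum>a\<in>UNIV. w a * (g a - (M+m)/2))"
  proof -
    have "(\<Sum>a\<in>UNIV. w a * (g a - (M+m)/2)) = (\<Sum>a\<in>UNIV. w a * g a) - (\<Sum>a\<in>UNIV. w a) * ((M+m)/2)"
      by (simp add: right_diff_distrib sum_subtractf sum_distrib_right)
    then show ?thesis using assms(1) by simp
  qed
  also have "\<dots> \<le> (\<Sum>a\<in>UNIV. \<bar>w a\<bar> * ((M - m)/2))"
  proof (rule sum_mono)
    fix a
    have "w a * (g a - (M+m)/2) \<le> \<bar>w a * (g a - (M+m)/2)\<bar>" by (rule abs_ge_self)
    also have "\<dots> = \<bar>w a\<bar> * \<bar>g a - (M+m)/2\<bar>" by (simp add: abs_mult)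
    also have "\<dots> \<le> \<bar>w a\<bar> * ((M - m)/2)"
    proof (rule mult_left_mono)
      show "\<bar>g a - (M+m)/2\<bar> \<le> (M - m)/2"
        unfolding abs_le_iff using assms(2)[of a] assms(3)[of a] by (auto simp: field_simps)
    qed simp
    finally show "w a * (g a - (M+m)/2) \<le> \<bar>w a\<bar> * ((M - m)/2)" .
  qed
  also have "\<dots> = (\<Sum>a\<in>UNIV. \<bar>w a\<bar>) / 2 * (M - m)"
    by (simp add: sum_distrib_right)
  finally show ?thesis .
qed

lemma pointwise_diff:
  fixes d :: "'a::finite \<Rightarrow> real"
  assumes "(\<Sum>a\<in>UNIV. d a) = 0"
  shows "\<bar>d b\<bar> \<le> (\<Sum>a\<in>UNIV. \<bar>d a\<bar>) / 2"
proof -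
  have s: "(\<Sum>a\<in>UNIV. d a) = d b + (\<Sum>a\<in>UNIV - {b}. d a)"
    by (simp add: sum.remove)
  have s2: "(\<Sum>a\<in>UNIV. \<bar>d a\<bar>) = \<bar>d b\<bar> + (\<Sum>a\<in>UNIV - {b}. \<bar>d a\<bar>)"
    by (simp add: sum.remove)
  have "\<bar>\<Sum>a\<in>UNIV - {b}. d a\<bar> \<le> (\<Sum>a\<in>UNIV - {b}. \<bar>d a\<bar>)" by (rule sum_abs)
  then show ?thesis using s s2 assms by linarith
qed

lemma conv_ineq:
  fixes p q :: real
  assumes "p > 0" "q > 0"
  shows "q * ln q - p * ln p \<le> (q - p) * (ln q + 1)"
proof -
  have "ln (q/p) \<le> q/p - 1" using assms by (intro ln_le_minus_one) auto
  then have "p * ln (q/p) \<le> p * (q/p - 1)" using assms by (intro mult_left_mono) auto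
  also have "\<dots> = q - p" using assms by (simp add: field_simps)
  finally have "p * (ln q - ln p) \<le> q - p" using assms by (simp add: ln_div)
  then show ?thesis by (simp add: algebra_simps)
qed

theorem lemma1:
  fixes P Q R :: "'a::finite \<Rightarrow> real"
  assumes "is_pmf P" and "is_pmf Q" and "is_pmf R"
    and "\<forall>a. R a > 0"
    and "(\<Sum>a\<in>UNIV. \<bar>P a - Q a\<bar>) < 2 * Min (range P)"
  shows "divergence Q R - divergence P R
    \<le> (\<Sum>a\<in>UNIV. \<bar>P a - Q a\<bar>) / 2 *
       log 2 ((Max (range P) + (\<Sum>a\<in>UNIV. \<bar>P a - Q a\<bar>) / 2)
              / (Min (range P) - (\<Sum>a\<in>UNIV. \<bar>P a - Q a\<bar>) / 2)
              * (Max (range R) / Min (range R)))"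
proof -
  define d where "d = (\<Sum>a\<in>UNIV. \<bar>P a - Q a\<bar>)"
  define pmin where "pmin = Min (range P)"
  define pmax where "pmax = Max (range P)"
  define rmin where "rmin = Min (range R)"
  define rmax where "rmax = Max (range R)"
  have sP: "(\<Sum>a\<in>UNIV. P a) = 1" and sQ: "(\<Sum>a\<in>UNIV. Q a) = 1"
    using assms(1,2) by (auto simp: is_pmf_def)
  have pminle: "pmin \<le> P a" for a unfolding pmin_def by (rule Min_le) auto
  have pmaxge: "P a \<le> pmax" for a unfolding pmax_def by (rule Max_ge) auto
  have rminle: "rmin \<le> R a" for a unfolding rmin_def by (rule Min_le) auto
  have rmaxge: "R a \<le> rmax" for a unfolding rmax_def by (rule Max_ge) auto
  have rminpos: "rmin > 0" unfolding rmin_def using assms(4)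
    by (subst Min_gr_iff) auto
  have d0: "d \<ge> 0" unfolding d_def by (intro sum_nonneg) auto
  have dlt: "d < 2 * pmin" using assms(5) unfolding d_def pmin_def .
  have sPQ: "(\<Sum>a\<in>UNIV. P a - Q a) = 0" using sP sQ by (simp add: sum_subtractf)
  have pd: "\<bar>P a - Q a\<bar> \<le> d / 2" for a
    unfolding d_def by (rule pointwise_diff[OF sPQ])
  define qlo where "qlo = pmin - d/2"
  define qhi where "qhi = pmax + d/2"
  have qlopos: "qlo > 0" unfolding qlo_def using dlt by simp
  have qlo: "qlo \<le> Q a" for a using pd[of a] pminle[of a] unfolding qlo_def by linarith
  have qhi: "Q a \<le> qhi" for a using pd[of a] pmaxge[of a] unfolding qhi_def by linarith
  have Qpos: "Q a > 0" for a using qlo[of a] qlopos by linarith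
  have Ppos: "P a > 0" for a using pminle[of a] dlt d0 by linarith
  have Rpos: "R a > 0" for a using assms(4) by simp
  have divQ: "divergence Q R = (\<Sum>a\<in>UNIV. Q a * log 2 (Q a / R a))"
    unfolding divergence_def using Qpos by (simp add: less_le)
  have divP: "divergence P R = (\<Sum>a\<in>UNIV. P a * log 2 (P a / R a))"
    unfolding divergence_def using Ppos by (simp add: less_le)
  define g where "g a = log 2 (Q a) - log 2 (R a)" for a
  have pw: "Q a * log 2 (Q a / R a) - P a * log 2 (P a / R a)
      \<le> (Q a - P a) * g a + (Q a - P a) / ln 2" for a
  proof -
    have c: "Q a * ln (Q a) - P a * ln (P a) \<le> (Q a - P a) * (ln (Q a) + 1)"
      using conv_ineq[OF Ppos Qpos] .
    have l2: "ln 2 > (0::real)" by simp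
    have "Q a * log 2 (Q a / R a) - P a * log 2 (P a / R a)
        = (Q a * ln (Q a) - P a * ln (P a)) / ln 2 - (Q a - P a) * log 2 (R a)"
      using Ppos[of a] Qpos[of a] Rpos[of a]
      by (simp add: log_def ln_div field_simps)
    also have "\<dots> \<le> ((Q a - P a) * (ln (Q a) + 1)) / ln 2 - (Q a - P a) * log 2 (R a)"
      using c l2 by (simp add: divide_right_mono)
    also have "\<dots> = (Q a - P a) * g a + (Q a - P a) / ln 2"
      unfolding g_def log_def by (simp add: field_simps)
    finally show ?thesis .
  qed
  have "divergence Q R - divergence P R
      = (\<Sum>a\<in>UNIV. Q a * log 2 (Q a / R a) - P a * log 2 (P a / R a))"
    by (simp add: divQ divP sum_subtractf)
  also have "\<dots> \<le> (\<Sum>a\<in>UNIV. (Q a - P a) * g a + (Q a - P a) / ln 2)"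
    by (rule sum_mono) (rule pw)
  also have "\<dots> = (\<Sum>a\<in>UNIV. (Q a - P a) * g a)"
  proof -
    have "(\<Sum>a\<in>UNIV. (Q a - P a) / ln 2) = (\<Sum>a\<in>UNIV. Q a - P a) / ln 2"
      by (simp add: sum_divide_distrib)
    also have "\<dots> = 0" using sP sQ by (simp add: sum_subtractf)
    finally show ?thesis by (simp add: sum.distrib)
  qed
  also have "\<dots> \<le> (\<Sum>a\<in>UNIV. \<bar>Q a - P a\<bar>) / 2 *
       ((log 2 qhi - log 2 rmin) - (log 2 qlo - log 2 rmax))"
  proof (rule wsum_bound)
    show "(\<Sum>a\<in>UNIV. Q a - P a) = 0" using sP sQ by (simp add: sum_subtractf)
    fix a
    have "log 2 qlo \<le> log 2 (Q a)" using qlo[of a] qlopos by simp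
    moreover have "log 2 (R a) \<le> log 2 rmax" using rmaxge[of a] Rpos[of a] by simp
    ultimately show "log 2 qlo - log 2 rmax \<le> g a" unfolding g_def by simp
    have "log 2 (Q a) \<le> log 2 qhi" using qhi[of a] Qpos[of a] by simp
    moreover have "log 2 rmin \<le> log 2 (R a)" using rminle[of a] rminpos by simp
    ultimately show "g a \<le> log 2 qhi - log 2 rmin" unfolding g_def by simp
  qed
  also have "(\<Sum>a\<in>UNIV. \<bar>Q a - P a\<bar>) = d" unfolding d_def by (simp add: abs_minus_commute)
  also have "(log 2 qhi - log 2 rmin) - (log 2 qlo - log 2 rmax)
      = log 2 (qhi / qlo * (rmax / rmin))"
  proof -
    have "qhi > 0" using qhi[of undefined] Qpos[of undefined] by linarith
    moreover have "rmax > 0" using rmaxge[of undefined] Rpos[of undefined] by linarith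
    ultimately show ?thesis using qlopos rminpos
      by (simp add: log_mult log_divide)
  qed
  finally show ?thesis unfolding d_def pmin_def pmax_def rmin_def rmax_def qhi_def qlo_def .
qed

end
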